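(* Assume $|C|<m$ and let $\mathcal S_1=\{(w_1+uw_2,w_3)\in\mathcal R^m: w_1\in\Delta_A,\ w_2\in\Delta_B,\ w_3\in\Delta_C^c\}$. Put $\epsilon=2$ if $A\subseteq B$ and $\epsilon=1$ if $A\not\subseteq B$. Then $\mathscr C_{\mathcal S_1}$ is a linear code over $R$ with parameters $$\big(q^{|A|+|B|}(q^m-q^{|C|}),\ q^{m+|A|+|A\cup B|},\ \epsilon(q-1)q^{|A|+|B|-1}(q^m-q^{|C|})\big),$$ and its Lee weight distribution is: weight $0$ with frequency $1$; weight $(q-1)q^{|A|+|B|-1}(q^m-q^{|C|})$ with frequency $2(q^{|A\cup B|-|B|}-1)$; weight $2(q-1)q^{|A|+|B|-1}(q^m-q^{|C|})$ with frequency $q^{m+|A|+|A\cup B|}-2q^{m-|C|+|A\cup B|-|B|}+q^{m-|C|}$; weight $(q-1)q^{|A|+|B|-1}(2q^m-q^{|C|})$ with frequency $2(q^{|A\cup B|-|B|}-1)(q^{m-|C|}-1)$; weight $2(q-1)q^{m+|A|+|B|-1}$ with frequency $q^{m-|C|}-1$. Consequently $\mathscr C_{\mathcal S_1}$ is a $2$-weight code if $A\subseteq B$ and a $4$-weight code if $A\not\subseteq B$.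
   Context: Let $q$ be a prime power, $\mathbb F_q$ the field of order $q$, $m\ge 2$ an integer and $[m]=\{1,\dots,m\}$. For $v\in\mathbb F_q^m$, $\mathrm{supp}(v)=\{i:v_i\ne0\}$ and $wt_H$ is Hamming weight. For nonempty $P\subseteq[m]$, $\Delta_P=\{v\in\mathbb F_q^m:\mathrm{supp}(v)\subseteq P\}$, $\Delta_P^c=\mathbb F_q^m\setminus\Delta_P$, $\Delta_P^*=\Delta_P\setminus\{\mathbf 0\}$. $A,B,C$ denote nonempty subsets of $[m]$. Let $R=\mathbb F_q[u]/\langle u^2\rangle$ and $\mathcal R=R\times\mathbb F_q$; each element of $\mathcal R^m$ is uniquely $(d+ue,f)$ with $d,e,f\in\mathbb F_q^m$. Define $\langle(d_1+ue_1,f_1),(d_2+ue_2,f_2)\rangle=(d_1+ue_1)\cdot(d_2+ue_2)+u\,f_1\cdot f_2\in R$, where $x\cdot y=\sum_i x_iy_i$. For a nonempty $\mathcal D\subseteq\mathcal R^m$ listed in a fixed order, $\mathscr C_{\mathcal D}=\{(\langle r,s\rangle)_{s\in\mathcal D}: r\in\mathcal R^m\}\subseteq R^{|\mathcal D|}$, an $R$-submodule (linear code over $R$). The Gray map $\Phi:R^n\to\mathbb F_q^{2n}$ is $\Phi(d+ue)=(e,d+e)$ for $d,e\in\mathbb F_q^n$; the Lee weight is $wt_L(x)=wt_H(\Phi(x))$. A code over $R$ has parameters $(n,K,D)$ if it has length $n$, cardinality $K$ and minimum nonzero Lee weight $D$. A $t$-weight code has exactly $t$ distinct nonzero weights. If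 two listed weight values coincide, their frequencies are added. *)

theory Defs
  imports "HOL-Library.FuncSet"
begin

text \<open>Vectors in F_q^m are functions 'n => 'a, where the finite index type 'n
  plays the role of [m] (so m = CARD('n)) and 'a is the finite field F_q.
  An element d + u e of R = F_q[u]/(u^2) is represented by the pair (d, e).
  An element (d + u e, f) of the m-th power of R x F_q is represented by the triple (d, e, f).\<close>

definition supp :: "('n \<Rightarrow> 'a::zero) \<Rightarrow> 'n set" where
  "supp v = {i. v i \<noteq> 0}"

definition Delta :: "'n set \<Rightarrow> ('n \<Rightarrow> 'a::zero) set" where
  "Delta P = {v. supp v \<subseteq> P}"

definition dotp :: "('n::finite \<Rightarrow> 'a::comm_ring_1) \<Rightarrow> ('n \<Rightarrow> 'a) \<Rightarrow> 'a" where
  "dotp x y = (\<Sum>i\<in>UNIV. x i * y i)"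

definition rmul :: "'a::comm_ring_1 \<times> 'a \<Rightarrow> 'a \<times> 'a \<Rightarrow> 'a \<times> 'a" where
  "rmul x y = (fst x * fst y, fst x * snd y + snd x * fst y)"

definition radd :: "'a::comm_ring_1 \<times> 'a \<Rightarrow> 'a \<times> 'a \<Rightarrow> 'a \<times> 'a" where
  "radd x y = (fst x + fst y, snd x + snd y)"

type_synonym ('n, 'a) Rvec = "('n \<Rightarrow> 'a) \<times> ('n \<Rightarrow> 'a) \<times> ('n \<Rightarrow> 'a)"

text \<open>The bilinear form <(d1+ue1,f1),(d2+ue2,f2)> = (d1+ue1).(d2+ue2) + u f1.f2 in R.\<close>
definition rip :: "('n::finite, 'a::comm_ring_1) Rvec \<Rightarrow> ('n, 'a) Rvec \<Rightarrow> 'a \<times> 'a" where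
  "rip r s = (case r of (d1, e1, f1) \<Rightarrow> case s of (d2, e2, f2) \<Rightarrow>
      (dotp d1 d2, dotp d1 e2 + dotp e1 d2 + dotp f1 f2))"

text \<open>The code C_D: codewords are functions on the defining set D (the fixed listing
  order of D is irrelevant for length, size and Lee weights).\<close>
definition code :: "('n::finite, 'a::comm_ring_1) Rvec set \<Rightarrow> (('n, 'a) Rvec \<Rightarrow> 'a \<times> 'a) set" where
  "code D = (\<lambda>r. restrict (rip r) D) ` UNIV"

definition zero_word :: "('n, 'a::zero) Rvec set \<Rightarrow> (('n, 'a) Rvec \<Rightarrow> 'a \<times> 'a)" where
  "zero_word D = restrict (\<lambda>_. (0, 0)) D"

text \<open>Lee weight on R: wt_H of the Gray image (e, d + e).\<close>
definition leeR :: "'a::{zero,plus} \<times> 'a \<Rightarrow> nat" where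
  "leeR x = (if snd x \<noteq> 0 then 1 else 0) + (if fst x + snd x \<noteq> 0 then 1 else 0)"

definition leeW :: "('n, 'a::{zero,plus}) Rvec set \<Rightarrow> (('n, 'a) Rvec \<Rightarrow> 'a \<times> 'a) \<Rightarrow> nat" where
  "leeW D c = (\<Sum>s\<in>D. leeR (c s))"

definition min_lee :: "('n::finite, 'a::comm_ring_1) Rvec set \<Rightarrow> nat" where
  "min_lee D = Min {leeW D c | c. c \<in> code D \<and> c \<noteq> zero_word D}"

definition nonzero_weights :: "('n::finite, 'a::comm_ring_1) Rvec set \<Rightarrow> nat set" where
  "nonzero_weights D = {leeW D c | c. c \<in> code D \<and> c \<noteq> zero_word D}"

definition S1 :: "'n set \<Rightarrow> 'n set \<Rightarrow> 'n set \<Rightarrow> ('n, 'a::zero) Rvec set" where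
  "S1 A B C = {(w1, w2, w3). w1 \<in> Delta A \<and> w2 \<in> Delta B \<and> w3 \<notin> Delta C}"

end

theory Submission
  imports Defs
begin


definition delta :: "'n \<Rightarrow> 'a::zero \<Rightarrow> 'n \<Rightarrow> 'a" where
  "delta k t = (\<lambda>i. if i = k then t else 0)"

lemma dotp_addL: "dotp (\<lambda>i. x i + y i) w = dotp x w + dotp y w"
  by (simp add: dotp_def distrib_right sum.distrib)
lemma dotp_addR: "dotp g (\<lambda>i. x i + y i) = dotp g x + dotp g y"
  by (simp add: dotp_def distrib_left sum.distrib)
lemma dotp_scaleL: "dotp (\<lambda>i. k * x i) w = k * dotp x w"
  by (simp add: dotp_def sum_distrib_left mult.assoc)
lemma dotp_delta: "dotp g (delta k t) = g k * t"
  by (simp add: dotp_def delta_def if_distrib cong: if_cong)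
lemma dotp_zeroR: "dotp g (\<lambda>_. 0) = 0"
  by (simp add: dotp_def)
lemma dotp_zeroL: "dotp (\<lambda>_. 0) g = 0"
  by (simp add: dotp_def)
lemma dotp_cong_supp: "w \<in> Delta P \<Longrightarrow> \<forall>i\<in>P. g i = g' i \<Longrightarrow> dotp g w = dotp g' w"
  unfolding dotp_def Delta_def supp_def
  apply (rule sum.cong, simp)
  subgoal for x by (cases "x \<in> P") (force simp: subset_eq)+
  done
lemma dotp_vanish: "w \<in> Delta P \<Longrightarrow> \<forall>i\<in>P. g i = 0 \<Longrightarrow> dotp g w = 0"
  unfolding dotp_def Delta_def supp_def
  apply (rule sum.neutral)
  subgoal by (metis (mono_tags) mem_Collect_eq mult_not_zero subsetD)
  done

lemma card_Delta:
  "card (Delta P :: ('n::finite \<Rightarrow> 'a::{finite,zero}) set) = card (UNIV::'a set) ^ card P"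
proof -
  have "bij_betw (\<lambda>v. restrict v P) (Delta P :: ('n \<Rightarrow> 'a) set) (PiE P (\<lambda>_. UNIV))"
  proof (rule bij_betw_byWitness[where f'="\<lambda>g i. if i \<in> P then g i else 0"])
    show "\<forall>a\<in>(Delta P :: ('n \<Rightarrow> 'a) set). (\<lambda>i. if i \<in> P then restrict a P i else 0) = a"
      by (auto simp: Delta_def supp_def fun_eq_iff)
    show "\<forall>a'\<in>PiE P (\<lambda>_. UNIV::'a set). restrict (\<lambda>i. if i \<in> P then a' i else 0) P = a'"
      by (auto simp: fun_eq_iff PiE_def extensional_def)
    show "(\<lambda>v. restrict v P) ` Delta P \<subseteq> PiE P (\<lambda>_. UNIV::'a set)" by auto
    show "(\<lambda>g i. if i \<in> P then g i else 0) ` PiE P (\<lambda>_. UNIV::'a set) \<subseteq> Delta P"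
      by (auto simp: Delta_def supp_def)
  qed
  then have "card (Delta P :: ('n \<Rightarrow> 'a) set) = card (PiE P (\<lambda>_. UNIV::'a set))"
    by (rule bij_betw_same_card)
  also have "\<dots> = card (UNIV::'a set) ^ card P"
    by (simp add: card_PiE)
  finally show ?thesis .
qed

lemma Delta_UNIV: "Delta UNIV = UNIV"
  by (auto simp: Delta_def)

lemma equidist:
  fixes \<phi> :: "'s \<Rightarrow> 'a::{finite,field}"
  assumes fin: "finite S"
    and sh: "\<And>t. \<exists>T. bij_betw T S S \<and> (\<forall>s\<in>S. \<phi> (T s) = \<phi> s + t)"
  shows "card S = card (UNIV::'a set) * card {s\<in>S. \<phi> s = 0}"
    and "card {s\<in>S. \<phi> s \<noteq> 0} = (card (UNIV::'a set) - 1) * card {s\<in>S. \<phi> s = 0}"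
proof -
  define N where "N = card {s\<in>S. \<phi> s = 0}"
  have fib: "card {s\<in>S. \<phi> s = t} = N" for t
  proof -
    obtain T where T: "bij_betw T S S" "\<forall>s\<in>S. \<phi> (T s) = \<phi> s + t" using sh by blast
    have img: "T ` {s\<in>S. \<phi> s = 0} = {s\<in>S. \<phi> s = t}"
    proof
      show "T ` {s\<in>S. \<phi> s = 0} \<subseteq> {s\<in>S. \<phi> s = t}"
        using T by (auto simp: bij_betw_def)
      show "{s\<in>S. \<phi> s = t} \<subseteq> T ` {s\<in>S. \<phi> s = 0}"
      proof
        fix s assume s: "s \<in> {s\<in>S. \<phi> s = t}"
        then obtain s' where "s' \<in> S" "s = T s'" using T(1) unfolding bij_betw_def by blast
        with s T(2) show "s \<in> T ` {s\<in>S. \<phi> s = 0}" by auto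
      qed
    qed
    moreover have inj: "inj_on T {s\<in>S. \<phi> s = 0}"
    proof -
      have "inj_on T S" using T(1) by (simp add: bij_betw_def)
      then show ?thesis by (rule inj_on_subset) auto
    qed
    ultimately show ?thesis using card_image[OF inj] img by (simp add: N_def)
  qed
  have "(\<Sum>t\<in>UNIV. card {s\<in>S. \<phi> s = t}) = (\<Sum>t\<in>UNIV. \<Sum>s\<in>{s\<in>S. \<phi> s = t}. (1::nat))"
    by simp
  also have "\<dots> = (\<Sum>s\<in>S. 1)"
    by (rule sum.group) (use fin in auto)
  finally have "card S = (\<Sum>t\<in>UNIV. card {s\<in>S. \<phi> s = t})" by simp
  also have "\<dots> = card (UNIV::'a set) * N"
    by (simp add: fib)
  finally have cS: "card S = card (UNIV::'a set) * N" .
  then show "card S = card (UNIV::'a set) * card {s\<in>S. \<phi> s = 0}" by (simp add: N_def)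
  have "{s\<in>S. \<phi> s \<noteq> 0} = S - {s\<in>S. \<phi> s = 0}" by auto
  then have "card {s\<in>S. \<phi> s \<noteq> 0} = card S - card {s\<in>S. \<phi> s = 0}"
    using fin by (simp add: card_Diff_subset)
  then show "card {s\<in>S. \<phi> s \<noteq> 0} = (card (UNIV::'a set) - 1) * card {s\<in>S. \<phi> s = 0}"
    using cS by (simp add: diff_mult_distrib N_def)
qed



definition addv :: "('n \<Rightarrow> 'a::plus) \<Rightarrow> ('n \<Rightarrow> 'a) \<Rightarrow> 'n \<Rightarrow> 'a" where
  "addv x y = (\<lambda>i. x i + y i)"

lemma S1_eq: "S1 A B C = Delta A \<times> Delta B \<times> (UNIV - Delta C)"
  by (auto simp: S1_def)

lemma card_UNIV_fun: "card (UNIV :: ('n::finite \<Rightarrow> 'a::{finite,zero}) set) = card (UNIV::'a set) ^ card (UNIV::'n set)"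
proof -
  have "card (Delta (UNIV::'n set) :: ('n \<Rightarrow> 'a) set) = card (UNIV::'a set) ^ card (UNIV::'n set)"
    by (rule card_Delta)
  then show ?thesis by (simp add: Delta_UNIV)
qed

lemma card_S1:
  "card (S1 A B C :: ('n::finite, 'a::{finite,zero}) Rvec set) =
     card (UNIV::'a set) ^ card A * card (UNIV::'a set) ^ card B *
     (card (UNIV::'a set) ^ card (UNIV::'n set) - card (UNIV::'a set) ^ card C)"
proof -
  have "card (UNIV - (Delta C :: ('n \<Rightarrow> 'a) set)) = card (UNIV :: ('n \<Rightarrow> 'a) set) - card (Delta C :: ('n \<Rightarrow> 'a) set)"
    by (simp add: card_Diff_subset)
  then show ?thesis
    by (simp add: S1_eq card_cartesian_product card_Delta card_UNIV_fun)
qed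

lemma addv_Delta: fixes x y :: "'n \<Rightarrow> 'a::monoid_add" shows "x \<in> Delta P \<Longrightarrow> y \<in> Delta P \<Longrightarrow> addv x y \<in> Delta P"
  by (auto simp: Delta_def supp_def addv_def subset_eq) (metis add.right_neutral)+

lemma neg_Delta: fixes x :: "'n \<Rightarrow> 'a::group_add" shows "x \<in> Delta P \<Longrightarrow> (\<lambda>i. - x i) \<in> Delta P"
  by (auto simp: Delta_def supp_def subset_eq)+

lemma addv_notDelta: fixes x y :: "'n \<Rightarrow> 'a::monoid_add" shows "x \<notin> Delta C \<Longrightarrow> y \<in> Delta C \<Longrightarrow> addv x y \<notin> Delta C"
  by (auto simp: Delta_def supp_def addv_def subset_eq) (metis add.right_neutral)+

lemma S1_shift:
  fixes v1 v2 v3 :: "'n \<Rightarrow> 'a::ab_group_add"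
  assumes v: "v1 \<in> Delta A" "v2 \<in> Delta B" "v3 \<in> Delta C"
  shows "bij_betw (\<lambda>(w1,w2,w3). (addv w1 v1, addv w2 v2, addv w3 v3)) (S1 A B C) (S1 A B C)"
proof (rule bij_betw_byWitness[where f'="\<lambda>(w1,w2,w3). (addv w1 (\<lambda>i. - v1 i), addv w2 (\<lambda>i. - v2 i), addv w3 (\<lambda>i. - v3 i))"])
  have n: "(\<lambda>i. - v1 i) \<in> Delta A" "(\<lambda>i. - v2 i) \<in> Delta B" "(\<lambda>i. - v3 i) \<in> Delta C"
    using v by (auto intro: neg_Delta)
  show "\<forall>a\<in>S1 A B C. (case case a of (w1, w2, w3) \<Rightarrow> (addv w1 v1, addv w2 v2, addv w3 v3) of
          (w1, w2, w3) \<Rightarrow> (addv w1 (\<lambda>i. - v1 i), addv w2 (\<lambda>i. - v2 i), addv w3 (\<lambda>i. - v3 i))) = a"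
    by (auto simp: addv_def)
  show "\<forall>a'\<in>S1 A B C. (case case a' of (w1, w2, w3) \<Rightarrow> (addv w1 (\<lambda>i. - v1 i), addv w2 (\<lambda>i. - v2 i), addv w3 (\<lambda>i. - v3 i)) of
          (w1, w2, w3) \<Rightarrow> (addv w1 v1, addv w2 v2, addv w3 v3)) = a'"
    by (auto simp: addv_def)
  show "(\<lambda>(w1, w2, w3). (addv w1 v1, addv w2 v2, addv w3 v3)) ` S1 A B C \<subseteq> S1 A B C"
    using v by (auto simp: S1_eq intro: addv_Delta dest: addv_notDelta)
  show "(\<lambda>(w1, w2, w3). (addv w1 (\<lambda>i. - v1 i), addv w2 (\<lambda>i. - v2 i), addv w3 (\<lambda>i. - v3 i))) ` S1 A B C \<subseteq> S1 A B C"
    using n by (auto simp: S1_eq intro: addv_Delta dest: addv_notDelta)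
qed

lemma delta_Delta: "i \<in> P \<Longrightarrow> delta i t \<in> Delta P"
  by (auto simp: delta_def Delta_def supp_def)

lemma zero_Delta: "(\<lambda>_. 0) \<in> Delta P"
  by (auto simp: Delta_def supp_def)

lemma dotp_addv: "dotp g (addv x y) = dotp g x + dotp g y"
  unfolding addv_def by (rule dotp_addR)

lemma count_nz1:
  fixes g1 g2 f :: "'n::finite \<Rightarrow> 'a::{finite,field}"
  assumes ne: "A \<noteq> {}" "B \<noteq> {}"
    and nz: "(\<exists>i\<in>A. g1 i \<noteq> 0) \<or> (\<exists>i\<in>B. g2 i \<noteq> 0) \<or> (\<exists>i\<in>C. f i \<noteq> 0)"
  shows "card {s \<in> S1 A B C. (case s of (w1,w2,w3) \<Rightarrow> dotp g1 w1 + dotp g2 w2 + dotp f w3) \<noteq> 0} =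
     (card (UNIV::'a set) - 1) * card (UNIV::'a set) ^ (card A + card B - 1) *
     (card (UNIV::'a set) ^ card (UNIV::'n set) - card (UNIV::'a set) ^ card C)"
proof -
  let ?q = "card (UNIV::'a set)"
  let ?\<phi> = "\<lambda>s. (case s of (w1,w2,w3) \<Rightarrow> dotp g1 w1 + dotp g2 w2 + dotp f w3)"
  let ?S = "S1 A B C :: ('n,'a) Rvec set"
  have sh: "\<exists>T. bij_betw T ?S ?S \<and> (\<forall>s\<in>?S. ?\<phi> (T s) = ?\<phi> s + t)" for t
  proof -
    have "\<exists>v1 v2 v3. v1 \<in> Delta A \<and> v2 \<in> Delta B \<and> v3 \<in> Delta C \<and> dotp g1 v1 + dotp g2 v2 + dotp f v3 = t"
      using nz
    proof (elim disjE bexE)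
      fix i assume "i \<in> A" "g1 i \<noteq> 0"
      then show ?thesis
        by (intro exI[of _ "delta i (t / g1 i)"] exI[of _ "\<lambda>_. 0"])
           (simp add: delta_Delta zero_Delta dotp_delta dotp_zeroR)
    next
      fix i assume "i \<in> B" "g2 i \<noteq> 0"
      then show ?thesis
        by (intro exI[of _ "delta i (t / g2 i)"] exI[of _ "\<lambda>_. 0"])
           (simp add: delta_Delta zero_Delta dotp_delta dotp_zeroR)
    next
      fix i assume "i \<in> C" "f i \<noteq> 0"
      then show ?thesis
        by (intro exI[of _ "delta i (t / f i)"] exI[of _ "\<lambda>_. 0"])
           (simp add: delta_Delta zero_Delta dotp_delta dotp_zeroR)
    qed
    then obtain v1 v2 v3 where v: "v1 \<in> Delta A" "v2 \<in> Delta B" "v3 \<in> Delta C"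
      and vt: "dotp g1 v1 + dotp g2 v2 + dotp f v3 = t" by blast
    show ?thesis
      apply (rule exI[of _ "\<lambda>(w1,w2,w3). (addv w1 v1, addv w2 v2, addv w3 v3)"])
      using S1_shift[OF v] vt by (auto simp: dotp_addv algebra_simps)
  qed
  have fin: "finite ?S" by simp
  note E = equidist[of ?S ?\<phi>, OF fin sh]
  define N where "N = card {s \<in> ?S. ?\<phi> s = 0}"
  have a1: "card A + card B \<ge> 1" using ne by (simp add: card_gt_0_iff Suc_le_eq add_pos_pos)
  have q0: "?q > 0" by (simp add: finite_UNIV_card_ge_0)
  have "?q * N = ?q * (?q ^ (card A + card B - 1) * (?q ^ card (UNIV::'n set) - ?q ^ card C))"
  proof -
    have "?q * N = ?q ^ (card A + card B) * (?q ^ card (UNIV::'n set) - ?q ^ card C)"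
      using E(1) card_S1[of A B C, where 'a='a] by (simp add: N_def power_add)
    also have "?q ^ (card A + card B) = ?q * ?q ^ (card A + card B - 1)"
      using a1 by (metis power_eq_if not_one_le_zero)
    finally show ?thesis by simp
  qed
  then have "N = ?q ^ (card A + card B - 1) * (?q ^ card (UNIV::'n set) - ?q ^ card C)"
    using q0 by simp
  then show ?thesis using E(2) by (simp add: N_def)
qed

lemma count_f:
  fixes f :: "'n::finite \<Rightarrow> 'a::{finite,field}"
  assumes "f \<noteq> (\<lambda>_. 0)"
  shows "card {w. dotp f w \<noteq> 0} = (card (UNIV::'a set) - 1) * card (UNIV::'a set) ^ (card (UNIV::'n set) - 1)"
proof -
  let ?q = "card (UNIV::'a set)"
  obtain i where i: "f i \<noteq> 0" using assms by auto
  have sh: "\<exists>T. bij_betw T (UNIV::('n\<Rightarrow>'a) set) UNIV \<and> (\<forall>s\<in>UNIV. dotp f (T s) = dotp f s + t)" for t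
  proof (intro exI conjI)
    show "bij_betw (\<lambda>w. addv w (delta i (t / f i))) (UNIV::('n\<Rightarrow>'a) set) UNIV"
      by (rule bij_betw_byWitness[where f'="\<lambda>w. addv w (delta i (- (t / f i)))"])
         (auto simp: addv_def delta_def fun_eq_iff)
    show "\<forall>s\<in>UNIV. dotp f (addv s (delta i (t / f i))) = dotp f s + t"
      using i by (simp add: dotp_addv dotp_delta)
  qed
  note E = equidist[of "UNIV::('n\<Rightarrow>'a) set" "dotp f", OF _ sh]
  define N where "N = card {s. dotp f s = 0}"
  have q0: "?q > 0" by (simp add: finite_UNIV_card_ge_0)
  have m0: "card (UNIV::'n set) > 0" by (simp add: finite_UNIV_card_ge_0)
  have p: "?q ^ card (UNIV::'n set) = ?q * ?q ^ (card (UNIV::'n set) - 1)"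
    using m0 by (metis Suc_diff_1 power_Suc)
  have c1: "card (UNIV::('n\<Rightarrow>'a) set) = ?q * N"
    using E(1) by (simp add: N_def)
  have c2: "card (UNIV::('n\<Rightarrow>'a) set) = ?q ^ card (UNIV::'n set)"
    by (rule card_UNIV_fun)
  have "?q * N = ?q * ?q ^ (card (UNIV::'n set) - 1)"
    using c1 c2 p by simp
  then have "N = ?q ^ (card (UNIV::'n set) - 1)" using q0 by simp
  then show ?thesis using E(2) by (simp add: N_def)
qed

lemma count_nz2:
  fixes g1 g2 f :: "'n::finite \<Rightarrow> 'a::{finite,field}"
  assumes z: "\<forall>i\<in>A. g1 i = 0" "\<forall>i\<in>B. g2 i = 0" "\<forall>i\<in>C. f i = 0"
    and fnz: "f \<noteq> (\<lambda>_. 0)"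
  shows "card {s \<in> S1 A B C. (case s of (w1,w2,w3) \<Rightarrow> dotp g1 w1 + dotp g2 w2 + dotp f w3) \<noteq> 0} =
     (card (UNIV::'a set) - 1) * card (UNIV::'a set) ^ (card (UNIV::'n set) + card A + card B - 1)"
proof -
  let ?q = "card (UNIV::'a set)"
  have "{s \<in> S1 A B C. (case s of (w1,w2,w3) \<Rightarrow> dotp g1 w1 + dotp g2 w2 + dotp f w3) \<noteq> 0}
      = Delta A \<times> Delta B \<times> {w. dotp f w \<noteq> 0}"
  proof (rule set_eqI)
    fix s :: "('n,'a) Rvec"
    obtain w1 w2 w3 where s: "s = (w1,w2,w3)" by (cases s) auto
    have "w3 \<in> Delta C \<Longrightarrow> dotp f w3 = 0" using z(3) dotp_vanish by blast
    moreover have "w1 \<in> Delta A \<Longrightarrow> dotp g1 w1 = 0" using z(1) dotp_vanish by blast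
    moreover have "w2 \<in> Delta B \<Longrightarrow> dotp g2 w2 = 0" using z(2) dotp_vanish by blast
    ultimately show "s \<in> {s \<in> S1 A B C. (case s of (w1,w2,w3) \<Rightarrow> dotp g1 w1 + dotp g2 w2 + dotp f w3) \<noteq> 0}
      \<longleftrightarrow> s \<in> Delta A \<times> Delta B \<times> {w. dotp f w \<noteq> 0}"
      by (auto simp: s S1_eq)
  qed
  then have "card {s \<in> S1 A B C. (case s of (w1,w2,w3) \<Rightarrow> dotp g1 w1 + dotp g2 w2 + dotp f w3) \<noteq> 0}
      = ?q ^ card A * (?q ^ card B * ((?q - 1) * ?q ^ (card (UNIV::'n set) - 1)))"
    by (simp add: card_cartesian_product card_Delta count_f[OF fnz])
  also have "\<dots> = (?q - 1) * ?q ^ (card (UNIV::'n set) + card A + card B - 1)"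
  proof -
    have m0: "card (UNIV::'n set) > 0" by (simp add: finite_UNIV_card_ge_0)
    then have "card (UNIV::'n set) + card A + card B - 1 = (card (UNIV::'n set) - 1) + card A + card B" by simp
    then show ?thesis by (simp add: power_add)
  qed
  finally show ?thesis .
qed

lemma count_nz0:
  fixes g1 g2 :: "'n::finite \<Rightarrow> 'a::{finite,field}"
  assumes z: "\<forall>i\<in>A. g1 i = 0" "\<forall>i\<in>B. g2 i = 0"
  shows "card {s \<in> S1 A B C. (case s of (w1,w2,w3) \<Rightarrow> dotp g1 w1 + dotp g2 w2 + dotp (\<lambda>_. 0) w3) \<noteq> 0} = 0"
proof -
  have "{s \<in> S1 A B C. (case s of (w1,w2,w3) \<Rightarrow> dotp g1 w1 + dotp g2 w2 + dotp (\<lambda>_. 0) w3) \<noteq> 0} = {}"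
    using dotp_vanish[OF _ z(1)] dotp_vanish[OF _ z(2)]
    by (auto simp: S1_eq dotp_zeroL)
  then show ?thesis by simp
qed



definition Z1 :: "'n set \<Rightarrow> 'n set \<Rightarrow> ('n \<Rightarrow> 'a::{zero,plus}) \<Rightarrow> ('n \<Rightarrow> 'a) \<Rightarrow> bool" where
  "Z1 A B d e = ((\<forall>i\<in>A. e i = 0) \<and> (\<forall>i\<in>B. d i = 0))"
definition Z2 :: "'n set \<Rightarrow> 'n set \<Rightarrow> ('n \<Rightarrow> 'a::{zero,plus}) \<Rightarrow> ('n \<Rightarrow> 'a) \<Rightarrow> bool" where
  "Z2 A B d e = ((\<forall>i\<in>A. d i + e i = 0) \<and> (\<forall>i\<in>B. d i = 0))"
definition tau :: "'n set \<Rightarrow> ('n \<Rightarrow> 'a::zero) \<Rightarrow> nat" where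
  "tau C f = (if f = (\<lambda>_. 0) then 0 else if \<exists>i\<in>C. f i \<noteq> 0 then 1 else 2)"
definition hw :: "nat \<Rightarrow> nat \<Rightarrow> bool \<Rightarrow> nat \<Rightarrow> nat" where
  "hw W V z t = (if \<not> z \<or> t = 1 then W else if t = 0 then 0 else V)"

lemma nzval:
  fixes g1 g2 f :: "'n::finite \<Rightarrow> 'a::{finite,field}"
  assumes ne: "A \<noteq> {}" "B \<noteq> {}"
    and Wd: "W = (card (UNIV::'a set) - 1) * card (UNIV::'a set) ^ (card A + card B - 1) *
     (card (UNIV::'a set) ^ card (UNIV::'n set) - card (UNIV::'a set) ^ card C)"
    and Vd: "V = (card (UNIV::'a set) - 1) * card (UNIV::'a set) ^ (card (UNIV::'n set) + card A + card B - 1)"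
  shows "card {s \<in> S1 A B C. (case s of (w1,w2,w3) \<Rightarrow> dotp g1 w1 + dotp g2 w2 + dotp f w3) \<noteq> 0} =
     hw W V ((\<forall>i\<in>A. g1 i = 0) \<and> (\<forall>i\<in>B. g2 i = 0)) (tau C f)"
proof (cases "(\<exists>i\<in>A. g1 i \<noteq> 0) \<or> (\<exists>i\<in>B. g2 i \<noteq> 0) \<or> (\<exists>i\<in>C. f i \<noteq> 0)")
  case True
  have "hw W V ((\<forall>i\<in>A. g1 i = 0) \<and> (\<forall>i\<in>B. g2 i = 0)) (tau C f) = W"
    using True by (auto simp: hw_def tau_def)
  then show ?thesis using count_nz1[OF ne True] Wd by simp
next
  case False
  show ?thesis
  proof (cases "f = (\<lambda>_. 0)")
    case True
    then show ?thesis using False count_nz0[of A g1 B g2 C] by (simp add: hw_def tau_def)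
  next
    case fnz: False
    have "hw W V ((\<forall>i\<in>A. g1 i = 0) \<and> (\<forall>i\<in>B. g2 i = 0)) (tau C f) = V"
      using False fnz by (auto simp: hw_def tau_def)
    moreover have "\<forall>i\<in>A. g1 i = 0" "\<forall>i\<in>B. g2 i = 0" "\<forall>i\<in>C. f i = 0" using False by auto
    ultimately show ?thesis using count_nz2[of A g1 B g2 C f] fnz Vd by simp
  qed
qed

lemma sum_ind_card: "finite S \<Longrightarrow> (\<Sum>s\<in>S. if P s then 1 else 0 :: nat) = card {s\<in>S. P s}"
  by (simp add: sum.inter_filter[symmetric])

lemma weight_pr:
  fixes d e f :: "'n::finite \<Rightarrow> 'a::{finite,field}"
  assumes ne: "A \<noteq> {}" "B \<noteq> {}"
    and Wd: "W = (card (UNIV::'a set) - 1) * card (UNIV::'a set) ^ (card A + card B - 1) *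
     (card (UNIV::'a set) ^ card (UNIV::'n set) - card (UNIV::'a set) ^ card C)"
    and Vd: "V = (card (UNIV::'a set) - 1) * card (UNIV::'a set) ^ (card (UNIV::'n set) + card A + card B - 1)"
  shows "leeW (S1 A B C) (restrict (rip (d,e,f)) (S1 A B C)) =
     hw W V (Z1 A B d e) (tau C f) + hw W V (Z2 A B d e) (tau C f)"
proof -
  let ?D = "S1 A B C :: ('n,'a) Rvec set"
  have "leeW ?D (restrict (rip (d,e,f)) ?D) =
    (\<Sum>s\<in>?D. (if (case s of (w1,w2,w3) \<Rightarrow> dotp e w1 + dotp d w2 + dotp f w3) \<noteq> 0 then 1 else 0)
       + (if (case s of (w1,w2,w3) \<Rightarrow> dotp (\<lambda>i. d i + e i) w1 + dotp d w2 + dotp f w3) \<noteq> 0 then 1 else 0))"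
    unfolding leeW_def
  proof (rule sum.cong[OF refl])
    fix s assume "s \<in> ?D"
    obtain w1 w2 w3 where s: "s = (w1,w2,w3)" by (cases s) auto
    show "leeR (restrict (rip (d, e, f)) ?D s) = (if (case s of (w1,w2,w3) \<Rightarrow> dotp e w1 + dotp d w2 + dotp f w3) \<noteq> 0 then 1 else 0)
       + (if (case s of (w1,w2,w3) \<Rightarrow> dotp (\<lambda>i. d i + e i) w1 + dotp d w2 + dotp f w3) \<noteq> 0 then 1 else 0)"
      using \<open>s \<in> ?D\<close> by (simp add: s rip_def leeR_def dotp_addL algebra_simps)
  qed
  also have "\<dots> = card {s\<in>?D. (case s of (w1,w2,w3) \<Rightarrow> dotp e w1 + dotp d w2 + dotp f w3) \<noteq> 0}
     + card {s\<in>?D. (case s of (w1,w2,w3) \<Rightarrow> dotp (\<lambda>i. d i + e i) w1 + dotp d w2 + dotp f w3) \<noteq> 0}"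
    by (simp add: sum.distrib sum_ind_card del: sum.inter_filter)
  also have "\<dots> = hw W V (Z1 A B d e) (tau C f) + hw W V (Z2 A B d e) (tau C f)"
    using nzval[OF ne Wd Vd, of e d f] nzval[OF ne Wd Vd, of "\<lambda>i. d i + e i" d f]
    by (simp add: Z1_def Z2_def)
  finally show ?thesis .
qed



lemma sum_fiber:
  fixes F :: "'t \<Rightarrow> nat"
  assumes "finite Y" "finite T" "\<tau> ` Y \<subseteq> T"
  shows "(\<Sum>y\<in>Y. F (\<tau> y)) = (\<Sum>t\<in>T. card {y\<in>Y. \<tau> y = t} * F t)"
proof -
  have "(\<Sum>y\<in>Y. F (\<tau> y)) = (\<Sum>t\<in>T. \<Sum>y\<in>{y\<in>Y. \<tau> y = t}. F (\<tau> y))"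
    using sum.group[OF assms, of "\<lambda>y. F (\<tau> y)"] by simp
  also have "\<dots> = (\<Sum>t\<in>T. \<Sum>y\<in>{y\<in>Y. \<tau> y = t}. F t)"
    by (rule sum.cong[OF refl], rule sum.cong[OF refl]) simp
  also have "\<dots> = (\<Sum>t\<in>T. card {y\<in>Y. \<tau> y = t} * F t)"
    by simp
  finally show ?thesis .
qed

lemma count_prod:
  assumes fin: "finite X" "finite Y" "finite K" "finite T"
    and im: "\<kappa> ` X \<subseteq> K" "\<tau> ` Y \<subseteq> T"
  shows "card {p \<in> X \<times> Y. \<Phi> (\<kappa> (fst p)) (\<tau> (snd p))} =
    (\<Sum>k\<in>K. card {x\<in>X. \<kappa> x = k} * (\<Sum>t\<in>T. card {y\<in>Y. \<tau> y = t} * (if \<Phi> k t then 1 else 0)))"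
proof -
  have "card {p \<in> X \<times> Y. \<Phi> (\<kappa> (fst p)) (\<tau> (snd p))} =
      (\<Sum>p\<in>X \<times> Y. if \<Phi> (\<kappa> (fst p)) (\<tau> (snd p)) then 1 else 0)"
    using fin by (simp add: sum_ind_card del: sum.inter_filter)
  also have "\<dots> = (\<Sum>x\<in>X. \<Sum>y\<in>Y. if \<Phi> (\<kappa> x) (\<tau> y) then 1 else 0)"
    by (simp add: sum.cartesian_product split_def)
  also have "\<dots> = (\<Sum>x\<in>X. \<Sum>t\<in>T. card {y\<in>Y. \<tau> y = t} * (if \<Phi> (\<kappa> x) t then 1 else 0))"
    by (rule sum.cong[OF refl], rule sum_fiber[where F="\<lambda>t. if \<Phi> _ t then 1 else 0"]) (use fin im in auto)
  also have "\<dots> = (\<Sum>k\<in>K. card {x\<in>X. \<kappa> x = k} * (\<Sum>t\<in>T. card {y\<in>Y. \<tau> y = t} * (if \<Phi> k t then 1 else 0)))"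
    by (rule sum_fiber[where F="\<lambda>k. \<Sum>t\<in>T. card {y\<in>Y. \<tau> y = t} * (if \<Phi> k t then 1 else 0)"]) (use fin im in auto)
  finally show ?thesis .
qed

lemma restrict_eqD: "restrict F D = restrict G D \<Longrightarrow> s \<in> D \<Longrightarrow> F s = G s"
  by (metis restrict_apply')

lemma pr_image:
  fixes D :: "('n::finite, 'a::{finite,field}) Rvec set"
  assumes "D = S1 A B C"
  shows "(\<lambda>((d,e),f). restrict (rip (d,e,f)) D) ` ((Delta (A \<union> B) \<times> Delta A) \<times> UNIV) = code D"
proof
  show "(\<lambda>((d,e),f). restrict (rip (d,e,f)) D) ` ((Delta (A \<union> B) \<times> Delta A) \<times> UNIV) \<subseteq> code D"
    by (auto simp: code_def)
  show "code D \<subseteq> (\<lambda>((d,e),f). restrict (rip (d,e,f)) D) ` ((Delta (A \<union> B) \<times> Delta A) \<times> UNIV)"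
  proof
    fix x assume "x \<in> code D"
    then obtain d e f where x: "x = restrict (rip (d,e,f)) D" by (auto simp: code_def)
    define d' where "d' = (\<lambda>i. if i \<in> A \<union> B then d i else 0)"
    define e' where "e' = (\<lambda>i. if i \<in> A then e i else 0)"
    have mem: "((d',e'),f) \<in> (Delta (A \<union> B) \<times> Delta A) \<times> UNIV"
      by (auto simp: d'_def e'_def Delta_def supp_def)
    have "restrict (rip (d',e',f)) D = restrict (rip (d,e,f)) D"
    proof (rule restrict_ext)
      fix s assume "s \<in> D"
      then obtain w1 w2 w3 where s: "s = (w1,w2,w3)" "w1 \<in> Delta A" "w2 \<in> Delta B"
        using assms by (cases s) (auto simp: S1_eq)
      have "dotp d' w1 = dotp d w1" by (rule dotp_cong_supp[OF s(2)]) (auto simp: d'_def)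
      moreover have "dotp d' w2 = dotp d w2" by (rule dotp_cong_supp[OF s(3)]) (auto simp: d'_def)
      moreover have "dotp e' w1 = dotp e w1" by (rule dotp_cong_supp[OF s(2)]) (auto simp: e'_def)
      ultimately show "rip (d',e',f) s = rip (d,e,f) s" by (simp add: s rip_def)
    qed
    then show "x \<in> (\<lambda>((d,e),f). restrict (rip (d,e,f)) D) ` ((Delta (A \<union> B) \<times> Delta A) \<times> UNIV)"
      using mem x by (intro image_eqI[where x="((d',e'),f)"]) auto
  qed
qed

lemma delta_notDelta: "j \<notin> C \<Longrightarrow> (t::'a::zero) \<noteq> 0 \<Longrightarrow> delta j t \<notin> Delta C"
  by (auto simp: delta_def Delta_def supp_def)

lemma pr_inj:
  fixes D :: "('n::finite, 'a::{finite,field}) Rvec set"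
  assumes DD: "D = S1 A B C" and j: "j \<notin> C"
  shows "inj_on (\<lambda>((d,e),f). restrict (rip (d,e,f)) D) ((Delta (A \<union> B) \<times> Delta A) \<times> UNIV)"
proof (rule inj_onI, clarsimp)
  fix d e f d' e' f' :: "'n \<Rightarrow> 'a"
  assume d: "d \<in> Delta (A \<union> B)" "d' \<in> Delta (A \<union> B)" and e: "e \<in> Delta A" "e' \<in> Delta A"
    and eq: "restrict (rip (d, e, f)) D = restrict (rip (d', e', f')) D"
  have E: "rip (d,e,f) s = rip (d',e',f') s" if "s \<in> D" for s
    using restrict_eqD[OF eq that] .
  let ?z = "\<lambda>_::'n. 0::'a"
  have zA: "?z \<in> Delta A" and zB: "?z \<in> Delta B" by (rule zero_Delta)+
  have dj: "delta j (1::'a) \<notin> Delta C" using j by (simp add: delta_notDelta)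
  have fj: "f j = f' j"
    using E[of "(?z, ?z, delta j 1)"] zA zB dj DD
    by (simp add: S1_eq rip_def dotp_zeroR dotp_delta)
  have ff: "f = f'"
  proof
    fix k show "f k = f' k"
    proof (cases "k = j")
      case True then show ?thesis using fj by simp
    next
      case False
      have "addv (delta j (1::'a)) (delta k 1) \<notin> Delta C"
        using j False by (auto simp: addv_def delta_def Delta_def supp_def)
      then show ?thesis
        using E[of "(?z, ?z, addv (delta j 1) (delta k 1))"] zA zB DD fj
        by (simp add: S1_eq rip_def dotp_zeroR dotp_delta dotp_addv)
    qed
  qed
  have dA: "d i = d' i \<and> e i = e' i" if i: "i \<in> A" for i
    using E[of "(delta i 1, ?z, delta j 1)"] delta_Delta[OF i, of "1::'a"] zB dj DD ff
    by (simp add: S1_eq rip_def dotp_zeroR dotp_delta)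
  have dB: "d i = d' i" if i: "i \<in> B" for i
    using E[of "(?z, delta i 1, delta j 1)"] delta_Delta[OF i, of "1::'a"] zA dj DD ff
    by (simp add: S1_eq rip_def dotp_zeroR dotp_delta)
  have "d = d'"
  proof
    fix i show "d i = d' i"
      using dA dB d by (cases "i \<in> A \<union> B") (auto simp: Delta_def supp_def subset_eq, metis)
  qed
  moreover have "e = e'"
  proof
    fix i show "e i = e' i"
      using dA e by (cases "i \<in> A") (auto simp: Delta_def supp_def subset_eq, metis)
  qed
  ultimately show "d = d' \<and> e = e' \<and> f = f'" using ff by simp
qed



lemma card_Delta_nz:
  "card (Delta P - {\<lambda>_. 0} :: ('n::finite \<Rightarrow> 'a::{finite,zero}) set) = card (UNIV::'a set) ^ card P - 1"
proof -
  have "(\<lambda>_. 0) \<in> (Delta P :: ('n \<Rightarrow> 'a) set)" by (rule zero_Delta)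
  then show ?thesis by (simp add: card_Delta)
qed

lemma DeltaI: "(\<And>i. i \<notin> P \<Longrightarrow> v i = 0) \<Longrightarrow> v \<in> Delta P"
  by (auto simp: Delta_def supp_def)
lemma DeltaD: "v \<in> Delta P \<Longrightarrow> i \<notin> P \<Longrightarrow> v i = 0"
  by (auto simp: Delta_def supp_def)

lemma cls_TT:
  fixes A B :: "'n::finite set"
  shows "{x \<in> (Delta (A \<union> B) \<times> Delta A :: (('n \<Rightarrow> 'a::field) \<times> ('n \<Rightarrow> 'a)) set).
      (Z1 A B (fst x) (snd x), Z2 A B (fst x) (snd x)) = (True, True)} = {(\<lambda>_. 0, \<lambda>_. 0)}"
proof (rule set_eqI, clarsimp simp: zero_Delta)
  fix d e :: "'n \<Rightarrow> 'a"
  show "(d \<in> Delta (A \<union> B) \<and> e \<in> Delta A \<and> Z1 A B d e \<and> Z2 A B d e) = (d = (\<lambda>_. 0) \<and> e = (\<lambda>_. 0))"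
  proof
    assume h: "d \<in> Delta (A \<union> B) \<and> e \<in> Delta A \<and> Z1 A B d e \<and> Z2 A B d e"
    have e0: "e i = 0" for i
      using h DeltaD[of e A i] by (cases "i \<in> A") (auto simp: Z1_def)
    have "d i = 0" for i
      using h DeltaD[of d "A \<union> B" i] e0[of i] by (cases "i \<in> A"; cases "i \<in> B") (auto simp: Z1_def Z2_def)
    with e0 show "d = (\<lambda>_. 0) \<and> e = (\<lambda>_. 0)" by auto
  next
    assume "d = (\<lambda>_. 0) \<and> e = (\<lambda>_. 0)"
    then show "d \<in> Delta (A \<union> B) \<and> e \<in> Delta A \<and> Z1 A B d e \<and> Z2 A B d e"
      by (auto simp: zero_Delta Z1_def Z2_def)
  qed
qed

lemma cls_TF:
  fixes A B :: "'n::finite set"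
  shows "{x \<in> (Delta (A \<union> B) \<times> Delta A :: (('n \<Rightarrow> 'a::field) \<times> ('n \<Rightarrow> 'a)) set).
      (Z1 A B (fst x) (snd x), Z2 A B (fst x) (snd x)) = (True, False)} =
      (Delta (A \<union> B - B) - {\<lambda>_. 0}) \<times> {\<lambda>_. 0}"
proof (rule set_eqI, clarsimp)
  fix d e :: "'n \<Rightarrow> 'a"
  show "(d \<in> Delta (A \<union> B) \<and> e \<in> Delta A \<and> Z1 A B d e \<and> \<not> Z2 A B d e) =
        (d \<in> Delta (A \<union> B - B) \<and> d \<noteq> (\<lambda>_. 0) \<and> e = (\<lambda>_. 0))"
  proof
    assume h: "d \<in> Delta (A \<union> B) \<and> e \<in> Delta A \<and> Z1 A B d e \<and> \<not> Z2 A B d e"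
    have e0: "e i = 0" for i
      using h DeltaD[of e A i] by (cases "i \<in> A") (auto simp: Z1_def)
    have dD: "d \<in> Delta (A \<union> B - B)"
    proof (rule DeltaI)
      fix i assume "i \<notin> A \<union> B - B"
      then show "d i = 0" using h DeltaD[of d "A \<union> B" i] by (cases "i \<in> B") (auto simp: Z1_def)
    qed
    from h obtain i where "i \<in> A" "d i + e i \<noteq> 0" by (auto simp: Z1_def Z2_def)
    then have "d \<noteq> (\<lambda>_. 0)" using e0 by auto
    with dD e0 show "d \<in> Delta (A \<union> B - B) \<and> d \<noteq> (\<lambda>_. 0) \<and> e = (\<lambda>_. 0)" by auto
  next
    assume h: "d \<in> Delta (A \<union> B - B) \<and> d \<noteq> (\<lambda>_. 0) \<and> e = (\<lambda>_. 0)"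
    then obtain i where i: "d i \<noteq> 0" by auto
    then have iA: "i \<in> A" using h DeltaD[of d "A \<union> B - B" i] by auto
    have dB: "\<forall>i\<in>B. d i = 0" using h DeltaD[of d "A \<union> B - B"] by auto
    have "d \<in> Delta (A \<union> B)" using h DeltaD[of d "A \<union> B - B"] by (intro DeltaI) auto
    then show "d \<in> Delta (A \<union> B) \<and> e \<in> Delta A \<and> Z1 A B d e \<and> \<not> Z2 A B d e"
      using h dB i iA by (auto simp: Z1_def Z2_def zero_Delta)
  qed
qed

lemma cls_FT:
  fixes A B :: "'n::finite set"
  shows "{x \<in> (Delta (A \<union> B) \<times> Delta A :: (('n \<Rightarrow> 'a::field) \<times> ('n \<Rightarrow> 'a)) set).
      (Z1 A B (fst x) (snd x), Z2 A B (fst x) (snd x)) = (False, True)} =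
      (\<lambda>d. (d, \<lambda>i. - d i)) ` (Delta (A \<union> B - B) - {\<lambda>_. 0})"
proof (rule set_eqI)
  fix x :: "('n \<Rightarrow> 'a) \<times> ('n \<Rightarrow> 'a)"
  obtain d e where x: "x = (d, e)" by (cases x) auto
  have "(d \<in> Delta (A \<union> B) \<and> e \<in> Delta A \<and> \<not> Z1 A B d e \<and> Z2 A B d e) =
        (d \<in> Delta (A \<union> B - B) \<and> d \<noteq> (\<lambda>_. 0) \<and> e = (\<lambda>i. - d i))"
  proof
    assume h: "d \<in> Delta (A \<union> B) \<and> e \<in> Delta A \<and> \<not> Z1 A B d e \<and> Z2 A B d e"
    have dD: "d \<in> Delta (A \<union> B - B)"
    proof (rule DeltaI)
      fix i assume "i \<notin> A \<union> B - B"
      then show "d i = 0" using h DeltaD[of d "A \<union> B" i] by (cases "i \<in> B") (auto simp: Z2_def)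
    qed
    have ee: "e i = - d i" for i
    proof (cases "i \<in> A")
      case True
      then have "d i + e i = 0" using h by (auto simp: Z2_def)
      then show ?thesis by (simp add: add_eq_0_iff)
    next
      case False then show ?thesis using h DeltaD[of e A i] DeltaD[OF dD, of i] by auto
    qed
    from h obtain i where "i \<in> A" "e i \<noteq> 0" by (auto simp: Z1_def Z2_def)
    then have "d \<noteq> (\<lambda>_. 0)" using ee by auto
    with dD ee show "d \<in> Delta (A \<union> B - B) \<and> d \<noteq> (\<lambda>_. 0) \<and> e = (\<lambda>i. - d i)" by auto
  next
    assume h: "d \<in> Delta (A \<union> B - B) \<and> d \<noteq> (\<lambda>_. 0) \<and> e = (\<lambda>i. - d i)"
    then obtain i where i: "d i \<noteq> 0" by auto
    then have iA: "i \<in> A" using h DeltaD[of d "A \<union> B - B" i] by auto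
    have dB: "\<forall>i\<in>B. d i = 0" using h DeltaD[of d "A \<union> B - B"] by auto
    have "d \<in> Delta (A \<union> B)" using h DeltaD[of d "A \<union> B - B"] by (intro DeltaI) auto
    moreover have "e \<in> Delta A" using h DeltaD[of d "A \<union> B - B"] by (intro DeltaI) auto
    ultimately show "d \<in> Delta (A \<union> B) \<and> e \<in> Delta A \<and> \<not> Z1 A B d e \<and> Z2 A B d e"
      using h dB i iA by (auto simp: Z1_def Z2_def)
  qed
  then show "x \<in> {x \<in> (Delta (A \<union> B) \<times> Delta A :: (('n \<Rightarrow> 'a::field) \<times> ('n \<Rightarrow> 'a)) set).
      (Z1 A B (fst x) (snd x), Z2 A B (fst x) (snd x)) = (False, True)} \<longleftrightarrow>
      x \<in> (\<lambda>d. (d, \<lambda>i. - d i)) ` (Delta (A \<union> B - B) - {\<lambda>_. 0})"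
    by (auto simp: x)
qed

lemma card_cls:
  fixes A B :: "'n::finite set"
  shows "card {x \<in> (Delta (A \<union> B) \<times> Delta A :: (('n \<Rightarrow> 'a::{finite,field}) \<times> ('n \<Rightarrow> 'a)) set).
      (Z1 A B (fst x) (snd x), Z2 A B (fst x) (snd x)) = (True, True)} = 1"
    and "card {x \<in> (Delta (A \<union> B) \<times> Delta A :: (('n \<Rightarrow> 'a::{finite,field}) \<times> ('n \<Rightarrow> 'a)) set).
      (Z1 A B (fst x) (snd x), Z2 A B (fst x) (snd x)) = (True, False)} = card (UNIV::'a set) ^ (card (A \<union> B) - card B) - 1"
    and "card {x \<in> (Delta (A \<union> B) \<times> Delta A :: (('n \<Rightarrow> 'a::{finite,field}) \<times> ('n \<Rightarrow> 'a)) set).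
      (Z1 A B (fst x) (snd x), Z2 A B (fst x) (snd x)) = (False, True)} = card (UNIV::'a set) ^ (card (A \<union> B) - card B) - 1"
proof -
  have cP: "card (A \<union> B - B) = card (A \<union> B) - card B"
    by (simp add: card_Diff_subset)
  show "card {x \<in> (Delta (A \<union> B) \<times> Delta A :: (('n \<Rightarrow> 'a::{finite,field}) \<times> ('n \<Rightarrow> 'a)) set).
      (Z1 A B (fst x) (snd x), Z2 A B (fst x) (snd x)) = (True, True)} = 1"
    by (simp only: cls_TT) simp
  show "card {x \<in> (Delta (A \<union> B) \<times> Delta A :: (('n \<Rightarrow> 'a::{finite,field}) \<times> ('n \<Rightarrow> 'a)) set).
      (Z1 A B (fst x) (snd x), Z2 A B (fst x) (snd x)) = (True, False)} = card (UNIV::'a set) ^ (card (A \<union> B) - card B) - 1"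
    by (simp only: cls_TF card_cartesian_product card_Delta_nz cP) simp
  have inj: "inj_on (\<lambda>d::'n \<Rightarrow> 'a. (d, \<lambda>i. - d i)) X" for X by (rule inj_onI) simp
  show "card {x \<in> (Delta (A \<union> B) \<times> Delta A :: (('n \<Rightarrow> 'a::{finite,field}) \<times> ('n \<Rightarrow> 'a)) set).
      (Z1 A B (fst x) (snd x), Z2 A B (fst x) (snd x)) = (False, True)} = card (UNIV::'a set) ^ (card (A \<union> B) - card B) - 1"
    by (simp only: cls_FT card_image[OF inj] card_Delta_nz cP)
qed

lemma card_tau:
  fixes C :: "'n::finite set"
  assumes "C \<noteq> UNIV"
  shows "card {f :: 'n \<Rightarrow> 'a::{finite,zero}. tau C f = 0} = 1"
    and "card {f :: 'n \<Rightarrow> 'a. tau C f = 1} = card (UNIV::'a set) ^ card (UNIV::'n set) - card (UNIV::'a set) ^ (card (UNIV::'n set) - card C)"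
    and "card {f :: 'n \<Rightarrow> 'a. tau C f = 2} = card (UNIV::'a set) ^ (card (UNIV::'n set) - card C) - 1"
proof -
  have s0: "{f :: 'n \<Rightarrow> 'a. tau C f = 0} = {\<lambda>_. 0}" by (auto simp: tau_def)
  then show "card {f :: 'n \<Rightarrow> 'a. tau C f = 0} = 1" by simp
  have cC: "card (- C) = card (UNIV::'n set) - card C" by (simp add: Compl_eq_Diff_UNIV card_Diff_subset)
  have s2: "{f :: 'n \<Rightarrow> 'a. tau C f = 2} = Delta (- C) - {\<lambda>_. 0}"
    by (auto simp: tau_def Delta_def supp_def subset_eq)
  then show "card {f :: 'n \<Rightarrow> 'a. tau C f = 2} = card (UNIV::'a set) ^ (card (UNIV::'n set) - card C) - 1"
    by (simp only: card_Delta_nz cC)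
  have s1: "{f :: 'n \<Rightarrow> 'a. tau C f = 1} = UNIV - Delta (- C)"
    by (auto simp: tau_def Delta_def supp_def subset_eq)
  then show "card {f :: 'n \<Rightarrow> 'a. tau C f = 1} = card (UNIV::'a set) ^ card (UNIV::'n set) - card (UNIV::'a set) ^ (card (UNIV::'n set) - card C)"
    by (simp add: card_Diff_subset card_Delta card_UNIV_fun cC)
qed



lemma dist_alg:
  fixes W V w :: nat and Q1 Q2 Qm Qa Qab :: int
  assumes W0: "0 < W" and WV: "W < V"
  shows "1 * (1 * (if 0 = w then 1 else 0) + (Qm - Q2) * (if W + W = w then 1 else 0) + (Q2 - 1) * (if V + V = w then 1 else 0))
   + (Q1 - 1) * (1 * (if W = w then 1 else 0) + (Qm - Q2) * (if W + W = w then 1 else 0) + (Q2 - 1) * (if V + W = w then 1 else 0))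
   + (Q1 - 1) * (1 * (if W = w then 1 else 0) + (Qm - Q2) * (if W + W = w then 1 else 0) + (Q2 - 1) * (if W + V = w then 1 else 0))
   + (Qab * Qa - 2 * Q1 + 1) * (1 * (if W + W = w then 1 else 0) + (Qm - Q2) * (if W + W = w then 1 else 0) + (Q2 - 1) * (if W + W = w then 1 else 0))
   = sum_list (map (\<lambda>(w', f). if w' = w then f else 0) [(0, 1), (W, 2 * (Q1 - 1)),
       (W + W, Qm * Qa * Qab - 2 * (Q2 * Q1) + Q2), (W + V, 2 * (Q1 - 1) * (Q2 - 1)), (V + V, Q2 - 1)])"
proof -
  consider "w = 0" | "w = W" | "w = W + W" | "w = W + V" | "w = V + V"
    | "w \<noteq> 0 \<and> w \<noteq> W \<and> w \<noteq> W + W \<and> w \<noteq> W + V \<and> w \<noteq> V + V" by blast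
  then show ?thesis
  proof cases
    case 1 then show ?thesis using W0 WV by simp
  next
    case 2 then show ?thesis using W0 WV by simp
  next
    case 3 then show ?thesis using W0 WV by (simp add: algebra_simps)
  next
    case 4 then show ?thesis using W0 WV by (simp add: algebra_simps)
  next
    case 5 then show ?thesis using W0 WV by simp
  next
    case 6 then show ?thesis by (simp add: add.commute)
  qed
qed

lemma list_eval:
  fixes W V w :: nat and xa xb xc xd xe :: int
  assumes W0: "0 < W" and WV: "W < V"
  defines "L \<equiv> \<lambda>w. sum_list (map (\<lambda>(w', f). if w' = w then f else 0) [(0, xa), (W, xb), (W + W, xc), (W + V, xd), (V + V, xe)])"
  shows "L 0 = xa" "L W = xb" "L (W + W) = xc" "L (W + V) = xd" "L (V + V) = xe"
    and "w \<noteq> 0 \<Longrightarrow> w \<noteq> W \<Longrightarrow> w \<noteq> W + W \<Longrightarrow> w \<noteq> W + V \<Longrightarrow> w \<noteq> V + V \<Longrightarrow> L w = 0"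
  using W0 WV by (auto simp: L_def)

theorem mainTheorem1:
  fixes A B C :: "'n::finite set"
    and q m a b c ab W :: nat and eps :: nat
    and D :: "('n, 'a::{finite,field}) Rvec set"
  defines "q \<equiv> card (UNIV :: 'a set)" and "m \<equiv> card (UNIV :: 'n set)"
    and "a \<equiv> card A" and "b \<equiv> card B" and "c \<equiv> card C" and "ab \<equiv> card (A \<union> B)"
    and "D \<equiv> S1 A B C"
    and "eps \<equiv> (if A \<subseteq> B then 2 else 1)"
    and "W \<equiv> (q - 1) * q ^ (a + b - 1) * (q ^ m - q ^ c)"
  assumes "m \<ge> 2" and "A \<noteq> {}" and "B \<noteq> {}" and "C \<noteq> {}" and "c < m"
  shows
    "((\<forall>x \<in> code D. \<forall>y \<in> code D. restrict (\<lambda>s. radd (x s) (y s)) D \<in> code D)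
     \<and> (\<forall>x \<in> code D. \<forall>r::'a \<times> 'a. restrict (\<lambda>s. rmul r (x s)) D \<in> code D))
   \<and> card D = q ^ (a + b) * (q ^ m - q ^ c)
   \<and> card (code D) = q ^ (m + a + ab)
   \<and> min_lee D = eps * W
   \<and> (\<forall>w::nat. int (card {x \<in> code D. leeW D x = w}) =
        sum_list (map (\<lambda>(w', f). if w' = w then f else 0)
          [(0, 1),
           (W, 2 * (int q ^ (ab - b) - 1)),
           (2 * W, int q ^ (m + a + ab) - 2 * int q ^ (m - c + ab - b) + int q ^ (m - c)),
           ((q - 1) * q ^ (a + b - 1) * (2 * q ^ m - q ^ c),
              2 * (int q ^ (ab - b) - 1) * (int q ^ (m - c) - 1)),
           (2 * (q - 1) * q ^ (m + a + b - 1), int q ^ (m - c) - 1)]))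
   \<and> card (nonzero_weights D) = (if A \<subseteq> B then 2 else 4)"
proof -
  let ?X = "Delta (A \<union> B) \<times> Delta A :: (('n \<Rightarrow> 'a) \<times> ('n \<Rightarrow> 'a)) set"
  let ?P = "?X \<times> (UNIV :: ('n \<Rightarrow> 'a) set)"
  let ?pr = "\<lambda>((d,e),f). restrict (rip (d,e,f)) D"
  let ?K = "{(True,True),(True,False),(False,True),(False,False)} :: (bool \<times> bool) set"
  let ?T = "{0,1,2} :: nat set"
  let ?\<kappa> = "\<lambda>x::('n \<Rightarrow> 'a) \<times> ('n \<Rightarrow> 'a). (Z1 A B (fst x) (snd x), Z2 A B (fst x) (snd x))"
  define V where "V = (q - 1) * q ^ (m + a + b - 1)"
  define G where "G = (\<lambda>(z1,z2) t. hw W V z1 t + hw W V z2 t)"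
  have Dd: "D = S1 A B C" by (simp add: D_def)
  have q2: "q \<ge> 2"
  proof -
    have "card {0::'a, 1} \<le> card (UNIV::'a set)" by (rule card_mono) auto
    then show ?thesis by (simp add: q_def)
  qed
  have a1: "a \<ge> 1" using \<open>A \<noteq> {}\<close> by (simp add: a_def Suc_le_eq card_gt_0_iff)
  have b1: "b \<ge> 1" using \<open>B \<noteq> {}\<close> by (simp add: b_def Suc_le_eq card_gt_0_iff)
  have abb: "ab \<ge> b" by (simp add: ab_def b_def card_mono)
  have CU: "C \<noteq> UNIV" using \<open>c < m\<close> by (auto simp: c_def m_def)
  then obtain j where j: "j \<notin> C" by auto
  have Wd': "W = (card (UNIV::'a set) - 1) * card (UNIV::'a set) ^ (card A + card B - 1) *
     (card (UNIV::'a set) ^ card (UNIV::'n set) - card (UNIV::'a set) ^ card C)"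
    by (simp add: W_def q_def a_def b_def m_def c_def)
  have Vd': "V = (card (UNIV::'a set) - 1) * card (UNIV::'a set) ^ (card (UNIV::'n set) + card A + card B - 1)"
    by (simp add: V_def q_def a_def b_def m_def)
  have qcm: "q ^ c < q ^ m" using q2 \<open>c < m\<close> by (simp add: power_strict_increasing)
  have W0: "W > 0"
    using q2 qcm by (simp add: W_def)
  have WV: "W < V"
  proof -
    have "q ^ m - q ^ c < q ^ m" using q2 qcm by simp
    then have "W < (q - 1) * q ^ (a + b - 1) * q ^ m"
      using q2 by (simp add: W_def)
    also have "\<dots> = V"
      using a1 by (simp add: V_def power_add[symmetric] add.commute add.left_commute)
    finally show ?thesis .
  qed
  have lin: "(\<forall>x \<in> code D. \<forall>y \<in> code D. restrict (\<lambda>s. radd (x s) (y s)) D \<in> code D)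
     \<and> (\<forall>x \<in> code D. \<forall>r::'a \<times> 'a. restrict (\<lambda>s. rmul r (x s)) D \<in> code D)"
  proof (intro conjI ballI allI)
    fix x y assume "x \<in> code D" "y \<in> code D"
    then obtain d1 e1 f1 d2 e2 f2 where x: "x = restrict (rip (d1,e1,f1)) D"
      and y: "y = restrict (rip (d2,e2,f2)) D" by (auto simp: code_def)
    have "restrict (\<lambda>s. radd (x s) (y s)) D =
       restrict (rip (\<lambda>i. d1 i + d2 i, \<lambda>i. e1 i + e2 i, \<lambda>i. f1 i + f2 i)) D"
      by (rule restrict_ext) (auto simp: x y rip_def radd_def dotp_addL split: prod.splits)
    then show "restrict (\<lambda>s. radd (x s) (y s)) D \<in> code D" by (simp add: code_def)
  next
    fix x and r :: "'a \<times> 'a" assume "x \<in> code D"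
    then obtain d e f where x: "x = restrict (rip (d,e,f)) D" by (auto simp: code_def)
    obtain r1 r2 where r: "r = (r1, r2)" by (cases r) auto
    have "restrict (\<lambda>s. rmul r (x s)) D =
       restrict (rip (\<lambda>i. r1 * d i, \<lambda>i. r1 * e i + r2 * d i, \<lambda>i. r1 * f i)) D"
      by (rule restrict_ext) (auto simp: x r rip_def rmul_def dotp_addL dotp_scaleL algebra_simps split: prod.splits)
    then show "restrict (\<lambda>s. rmul r (x s)) D \<in> code D" by (simp add: code_def)
  qed
  have cardD: "card D = q ^ (a + b) * (q ^ m - q ^ c)"
    using card_S1[of A B C, where 'a='a]
    by (simp add: D_def q_def a_def b_def m_def c_def power_add)
  have img: "?pr ` ?P = code D" using pr_image[OF Dd] by simp
  have inj: "inj_on ?pr ?P" using pr_inj[OF Dd j] by simp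
  have cardP: "card ?P = q ^ (m + a + ab)"
    by (simp add: card_cartesian_product card_Delta card_UNIV_fun q_def m_def a_def ab_def power_add)
  have cardcode: "card (code D) = q ^ (m + a + ab)"
    using card_image[OF inj] img cardP by simp
  have wt: "leeW D (?pr p) = G (?\<kappa> (fst p)) (tau C (snd p))" for p
  proof -
    obtain d e f where p: "p = ((d,e),f)" by (metis prod.collapse)
    show ?thesis
      using weight_pr[OF \<open>A \<noteq> {}\<close> \<open>B \<noteq> {}\<close> Wd' Vd', of d e f] by (simp add: p G_def D_def)
  qed
  have dist0: "card {x \<in> code D. leeW D x = w} =
      (\<Sum>k\<in>?K. card {x\<in>?X. ?\<kappa> x = k} * (\<Sum>t\<in>?T. card {y\<in>(UNIV::('n \<Rightarrow> 'a) set). tau C y = t} * (if G k t = w then 1 else 0)))" for w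
  proof -
    have "{x \<in> code D. leeW D x = w} = {x \<in> ?pr ` ?P. leeW D x = w}"
      using img by simp
    also have "\<dots> = ?pr ` {p \<in> ?P. leeW D (?pr p) = w}" by blast
    finally have "{x \<in> code D. leeW D x = w} = ?pr ` {p \<in> ?P. leeW D (?pr p) = w}" .
    then have "card {x \<in> code D. leeW D x = w} = card {p \<in> ?P. leeW D (?pr p) = w}"
      using card_image[OF inj_on_subset[OF inj]] by auto
    also have "\<dots> = card {p \<in> ?P. G (?\<kappa> (fst p)) (tau C (snd p)) = w}"
      by (simp only: wt)
    also have "\<dots> = (\<Sum>k\<in>?K. card {x\<in>?X. ?\<kappa> x = k} * (\<Sum>t\<in>?T. card {y\<in>(UNIV::('n \<Rightarrow> 'a) set). tau C y = t} * (if G k t = w then 1 else 0)))"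
      by (rule count_prod) (auto simp: tau_def)
    finally show ?thesis .
  qed
  define cK where "cK = (\<lambda>k. card {x\<in>?X. ?\<kappa> x = k})"
  define cT where "cT = (\<lambda>t. card {y\<in>(UNIV::('n \<Rightarrow> 'a) set). tau C y = t})"
  have dist: "card {x \<in> code D. leeW D x = w} =
      (\<Sum>k\<in>?K. cK k * (\<Sum>t\<in>?T. cT t * (if G k t = w then 1 else 0)))" for w
    using dist0[of w] by (simp only: cK_def cT_def)
  have q0: "q > 0" using q2 by simp
  have cTT: "cK (True,True) = 1" unfolding cK_def by (rule card_cls(1))
  have cTF: "int (cK (True,False)) = int q ^ (ab - b) - 1"
  proof -
    have "cK (True,False) = q ^ (ab - b) - 1" unfolding cK_def
      using card_cls(2)[of A B, where 'a='a] by (simp add: q_def ab_def b_def)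
    moreover have "q ^ (ab - b) \<ge> 1" using q0 by simp
    ultimately show ?thesis by (simp add: of_nat_diff)
  qed
  have cFT: "int (cK (False,True)) = int q ^ (ab - b) - 1"
  proof -
    have "cK (False,True) = q ^ (ab - b) - 1" unfolding cK_def
      using card_cls(3)[of A B, where 'a='a] by (simp add: q_def ab_def b_def)
    moreover have "q ^ (ab - b) \<ge> 1" using q0 by simp
    ultimately show ?thesis by (simp add: of_nat_diff)
  qed
  have cX: "card ?X = q ^ ab * q ^ a"
    by (simp add: card_cartesian_product card_Delta q_def ab_def a_def)
  have "card ?X = (\<Sum>k\<in>?K. cK k * 1)"
  proof -
    have "(\<Sum>y\<in>?X. (\<lambda>_. 1::nat) (?\<kappa> y)) = (\<Sum>k\<in>?K. card {y\<in>?X. ?\<kappa> y = k} * (\<lambda>_. 1) k)"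
      by (rule sum_fiber) auto
    then show ?thesis by (simp add: cK_def)
  qed
  then have "int (card ?X) = int (cK (True,True)) + int (cK (True,False)) + int (cK (False,True)) + int (cK (False,False))"
    by simp
  then have cFF: "int (cK (False,False)) = int q ^ ab * int q ^ a - 2 * int q ^ (ab - b) + 1"
    using cX cTT cTF cFT by simp
  have ct0: "cT 0 = 1" unfolding cT_def using card_tau(1)[OF CU, where 'a='a] by simp
  have ct1: "int (cT 1) = int q ^ m - int q ^ (m - c)"
  proof -
    have "cT 1 = q ^ m - q ^ (m - c)" unfolding cT_def
      using card_tau(2)[OF CU, where 'a='a] by (simp add: q_def m_def c_def)
    moreover have "q ^ (m - c) \<le> q ^ m" using q0 by (simp add: power_increasing)
    ultimately show ?thesis by (simp add: of_nat_diff)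
  qed
  have ct2: "int (cT 2) = int q ^ (m - c) - 1"
  proof -
    have "cT 2 = q ^ (m - c) - 1" unfolding cT_def
      using card_tau(3)[OF CU, where 'a='a] by (simp add: q_def m_def c_def)
    moreover have "q ^ (m - c) \<ge> 1" using q0 by simp
    ultimately show ?thesis by (simp add: of_nat_diff)
  qed
  have GTT: "G (True,True) 0 = 0" "G (True,True) 1 = W + W" "G (True,True) 2 = V + V"
    and GTF: "G (True,False) 0 = W" "G (True,False) 1 = W + W" "G (True,False) 2 = V + W"
    and GFT: "G (False,True) 0 = W" "G (False,True) 1 = W + W" "G (False,True) 2 = W + V"
    and GFF: "G (False,False) 0 = W + W" "G (False,False) 1 = W + W" "G (False,False) 2 = W + W"
    by (simp_all add: G_def hw_def)
  have e3: "(q - 1) * q ^ (a + b - 1) * (2 * q ^ m - q ^ c) = W + V"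
  proof -
    have h: "2 * q ^ m - q ^ c = (q ^ m - q ^ c) + q ^ m" using qcm by simp
    have "(q - 1) * q ^ (a + b - 1) * (2 * q ^ m - q ^ c) = (q - 1) * q ^ (a + b - 1) * ((q ^ m - q ^ c) + q ^ m)"
      by (simp only: h)
    also have "\<dots> = W + (q - 1) * q ^ (a + b - 1) * q ^ m"
      by (simp only: W_def distrib_left)
    finally have "(q - 1) * q ^ (a + b - 1) * (2 * q ^ m - q ^ c) = W + (q - 1) * q ^ (a + b - 1) * q ^ m" .
    also have "(q - 1) * q ^ (a + b - 1) * q ^ m = V"
      using a1 by (simp add: V_def power_add[symmetric] add.commute add.left_commute mult.assoc)
    finally show ?thesis .
  qed
  have e4: "2 * (q - 1) * q ^ (m + a + b - 1) = V + V" by (simp add: V_def)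
  have p1: "int q ^ (m + a + ab) = int q ^ m * int q ^ a * int q ^ ab" by (simp add: power_add)
  have p2: "int q ^ (m - c + ab - b) = int q ^ (m - c) * int q ^ (ab - b)"
    using abb by (simp add: power_add[symmetric])
  have distI: "int (card {x \<in> code D. leeW D x = w}) =
        sum_list (map (\<lambda>(w', f). if w' = w then f else 0)
          [(0, 1),
           (W, 2 * (int q ^ (ab - b) - 1)),
           (2 * W, int q ^ (m + a + ab) - 2 * int q ^ (m - c + ab - b) + int q ^ (m - c)),
           ((q - 1) * q ^ (a + b - 1) * (2 * q ^ m - q ^ c),
              2 * (int q ^ (ab - b) - 1) * (int q ^ (m - c) - 1)),
           (2 * (q - 1) * q ^ (m + a + b - 1), int q ^ (m - c) - 1)])" for w
  proof -
    have L: "int (card {x \<in> code D. leeW D x = w}) =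
      int (cK (True,True)) * (int (cT 0) * (if G (True,True) 0 = w then 1 else 0) + int (cT 1) * (if G (True,True) 1 = w then 1 else 0) + int (cT 2) * (if G (True,True) 2 = w then 1 else 0))
    + int (cK (True,False)) * (int (cT 0) * (if G (True,False) 0 = w then 1 else 0) + int (cT 1) * (if G (True,False) 1 = w then 1 else 0) + int (cT 2) * (if G (True,False) 2 = w then 1 else 0))
    + int (cK (False,True)) * (int (cT 0) * (if G (False,True) 0 = w then 1 else 0) + int (cT 1) * (if G (False,True) 1 = w then 1 else 0) + int (cT 2) * (if G (False,True) 2 = w then 1 else 0))
    + int (cK (False,False)) * (int (cT 0) * (if G (False,False) 0 = w then 1 else 0) + int (cT 1) * (if G (False,False) 1 = w then 1 else 0) + int (cT 2) * (if G (False,False) 2 = w then 1 else 0))"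
      unfolding dist by (simp add: algebra_simps)
    have cTTi: "int (cK (True,True)) = 1" and ct0i: "int (cT 0) = 1" using cTT ct0 by simp_all
    have e2: "2 * W = W + W" by simp
    show ?thesis
      unfolding L e3 e4 e2 p1 p2 GTT GTF GFT GFF cTTi ct0i ct1 ct2 cTF cFT cFF
      by (rule dist_alg[OF W0 WV])
  qed
  define F where "F = (\<lambda>w. card {x \<in> code D. leeW D x = w})"
  have e2: "2 * W = W + W" by simp
  have distJ: "int (F w) = sum_list (map (\<lambda>(w', f). if w' = w then f else 0)
          [(0, 1),
           (W, 2 * (int q ^ (ab - b) - 1)),
           (W + W, int q ^ (m + a + ab) - 2 * int q ^ (m - c + ab - b) + int q ^ (m - c)),
           (W + V, 2 * (int q ^ (ab - b) - 1) * (int q ^ (m - c) - 1)),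
           (V + V, int q ^ (m - c) - 1)])" for w
    using distI[of w] unfolding F_def e3 e4 e2 .
  note LE = list_eval[OF W0 WV, where xa=1 and xb="2 * (int q ^ (ab - b) - 1)"
     and xc="int q ^ (m + a + ab) - 2 * int q ^ (m - c + ab - b) + int q ^ (m - c)"
     and xd="2 * (int q ^ (ab - b) - 1) * (int q ^ (m - c) - 1)" and xe="int q ^ (m - c) - 1"]
  have F0: "int (F 0) = 1" using distJ[of 0] LE(1) by simp
  have FW: "int (F W) = 2 * (int q ^ (ab - b) - 1)" using distJ[of W] LE(2) by simp
  have F2W: "int (F (W + W)) = int q ^ (m + a + ab) - 2 * int q ^ (m - c + ab - b) + int q ^ (m - c)"
    using distJ[of "W + W"] LE(3) by simp
  have FWV: "int (F (W + V)) = 2 * (int q ^ (ab - b) - 1) * (int q ^ (m - c) - 1)"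
    using distJ[of "W + V"] LE(4) by simp
  have F2V: "int (F (V + V)) = int q ^ (m - c) - 1"
    using distJ[of "V + V"] LE(5) by simp
  have Foth: "int (F w) = 0" if "w \<noteq> 0" "w \<noteq> W" "w \<noteq> W + W" "w \<noteq> W + V" "w \<noteq> V + V" for w
    using distJ[of w] LE(6)[OF that] by simp
  have Q2: "int q ^ (m - c) \<ge> 2"
  proof -
    have "q ^ 1 \<le> q ^ (m - c)" using q0 \<open>c < m\<close> by (intro power_increasing) auto
    then have "q ^ (m - c) \<ge> 2" using q2 by simp
    then show ?thesis by (metis of_nat_numeral of_nat_le_iff of_nat_power)
  qed
  have Q1: "(int q ^ (ab - b) = 1) \<longleftrightarrow> A \<subseteq> B"
  proof
    assume "A \<subseteq> B"
    then have "A \<union> B = B" by auto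
    then have "ab = b" by (simp add: ab_def b_def)
    then show "int q ^ (ab - b) = 1" by simp
  next
    assume h: "int q ^ (ab - b) = 1"
    show "A \<subseteq> B"
    proof (rule ccontr)
      assume "\<not> A \<subseteq> B"
      then have "B \<subset> A \<union> B" by auto
      then have "b < ab" by (simp add: ab_def b_def psubset_card_mono)
      then have "q ^ 1 \<le> q ^ (ab - b)" using q0 by (intro power_increasing) auto
      then have "q ^ (ab - b) \<ge> 2" using q2 by simp
      then have "int q ^ (ab - b) \<ge> 2" by (metis of_nat_numeral of_nat_le_iff of_nat_power)
      with h show False by simp
    qed
  qed
  have Q1ge: "int q ^ (ab - b) \<ge> 1" using q0 by simp
  have F2Wpos: "int (F (W + W)) > 0"
  proof -
    have ex: "m + a + ab = (m - c + ab - b) + (c + b + a)" using abb \<open>c < m\<close> by simp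
    have "q ^ 1 \<le> q ^ (c + b + a)" using q0 a1 by (intro power_increasing) auto
    then have "2 \<le> q ^ (c + b + a)" using q2 by simp
    then have "2 * q ^ (m - c + ab - b) \<le> q ^ (m - c + ab - b) * q ^ (c + b + a)" by simp
    also have "\<dots> = q ^ (m + a + ab)" by (simp only: ex power_add)
    finally have h: "2 * q ^ (m - c + ab - b) \<le> q ^ (m + a + ab)" .
    then have "int (2 * q ^ (m - c + ab - b)) \<le> int (q ^ (m + a + ab))" by (simp only: of_nat_le_iff)
    then have "2 * int q ^ (m - c + ab - b) \<le> int q ^ (m + a + ab)" by simp
    moreover have "int q ^ (m - c) > 0" using q0 by simp
    ultimately show ?thesis using F2W by linarith
  qed
  have z0: "zero_word D = restrict (rip ((\<lambda>_. 0), (\<lambda>_. 0), (\<lambda>_. 0))) D"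
    unfolding zero_word_def by (rule restrict_ext) (auto simp: rip_def dotp_zeroL split: prod.splits)
  have zin: "zero_word D \<in> code D" by (simp add: z0 code_def)
  have zw: "leeW D (zero_word D) = 0"
  proof -
    have "leeW D (zero_word D) = (\<Sum>s\<in>D. leeR ((0::'a), (0::'a)))"
      unfolding leeW_def by (rule sum.cong) (auto simp: zero_word_def)
    then show ?thesis by (simp add: leeR_def)
  qed
  have finC: "finite (code D)" by (simp add: code_def)
  have NZ: "nonzero_weights D = {w. w \<noteq> 0 \<and> F w \<noteq> 0}"
  proof (rule set_eqI)
    fix w
    show "w \<in> nonzero_weights D \<longleftrightarrow> w \<in> {w. w \<noteq> 0 \<and> F w \<noteq> 0}"
    proof
      assume "w \<in> nonzero_weights D"
      then obtain x where x: "x \<in> code D" "x \<noteq> zero_word D" "leeW D x = w"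
        by (auto simp: nonzero_weights_def)
      have ne: "F w \<noteq> 0" using x finC by (auto simp: F_def card_eq_0_iff)
      have "w \<noteq> 0"
      proof
        assume w0: "w = 0"
        have "{x, zero_word D} \<subseteq> {x \<in> code D. leeW D x = 0}" using x zin zw w0 by auto
        then have "card {x, zero_word D} \<le> F 0"
          unfolding F_def by (rule card_mono[rotated]) (use finC in auto)
        then have "2 \<le> F 0" using x(2) by simp
        with F0 show False by simp
      qed
      with ne show "w \<in> {w. w \<noteq> 0 \<and> F w \<noteq> 0}" by simp
    next
      assume "w \<in> {w. w \<noteq> 0 \<and> F w \<noteq> 0}"
      then have w: "w \<noteq> 0" "F w \<noteq> 0" by auto
      then obtain x where x: "x \<in> code D" "leeW D x = w" by (auto simp: F_def)
      then have "x \<noteq> zero_word D" using zw w by auto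
      with x show "w \<in> nonzero_weights D" by (auto simp: nonzero_weights_def)
    qed
  qed
  have NZS: "nonzero_weights D = (if A \<subseteq> B then {W + W, V + V} else {W, W + W, W + V, V + V})"
  proof -
    have "(w \<noteq> 0 \<and> F w \<noteq> 0) \<longleftrightarrow> w \<in> (if A \<subseteq> B then {W + W, V + V} else {W, W + W, W + V, V + V})" for w
    proof -
      consider "w = 0" | "w = W" | "w = W + W" | "w = W + V" | "w = V + V"
        | "w \<noteq> 0 \<and> w \<noteq> W \<and> w \<noteq> W + W \<and> w \<noteq> W + V \<and> w \<noteq> V + V" by blast
      then show ?thesis
      proof cases
        case 1 then show ?thesis using W0 WV by auto
      next
        case 2
        have "F W \<noteq> 0 \<longleftrightarrow> \<not> A \<subseteq> B" using FW Q1 by (metis of_nat_eq_0_iff mult_eq_0_iff zero_neq_numeral right_minus_eq)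
        then show ?thesis using 2 W0 WV by auto
      next
        case 3
        have "F (W + W) \<noteq> 0" using F2Wpos by auto
        then show ?thesis using 3 W0 WV by auto
      next
        case 4
        have "F (W + V) \<noteq> 0 \<longleftrightarrow> \<not> A \<subseteq> B" using FWV Q1 Q2
          by (metis of_nat_eq_0_iff mult_eq_0_iff zero_neq_numeral right_minus_eq numeral_le_one_iff semiring_norm(69))
        then show ?thesis using 4 W0 WV by auto
      next
        case 5
        have "F (V + V) \<noteq> 0" using F2V Q2 by auto
        then show ?thesis using 5 W0 WV by auto
      next
        case 6
        then have "int (F w) = 0" using Foth by blast
        then show ?thesis using 6 by auto
      qed
    qed
    then show ?thesis unfolding NZ by blast
  qed
  have minl: "min_lee D = Min (nonzero_weights D)"
    by (simp add: min_lee_def nonzero_weights_def)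
  have minv: "min_lee D = eps * W"
    unfolding minl NZS eps_def using W0 WV by (auto simp: min_def)
  have cardNZ: "card (nonzero_weights D) = (if A \<subseteq> B then 2 else 4)"
    unfolding NZS using W0 WV by auto
  show ?thesis
    using lin cardD cardcode minv distI cardNZ by blast
qed


end
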